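(* Let $n \ge 1$, $1 \le i \le n+1$, $0 \le k \le n$, $0 \le \ell \le n-k$ be integers. Let $T(n;i,k,\ell,m)$ denote the number of rooted trees on the vertex set $[n+1]=\{1,\ldots,n+1\}$ in which the root is $i$, the root has exactly $k$ children smaller than $i$ and exactly $\ell$ children larger than $i$, and the subtrees hanging from the children smaller than $i$ contain in total $m$ vertices (so the subtrees hanging from the children larger than $i$ contain in total $n-m$ vertices). Then $$\sum_{m=k}^{n-\ell} T(n;i,k,\ell,m) \;=\; \binom{i-1}{k}\binom{n+1-i}{\ell}\,(k+\ell)\,n^{\,n-k-\ell-1}.$$
   Context: A rooted tree on a vertex set $V$ is a tree with vertex set $V$ together with a distinguished vertex (the root). Removing the root from a rooted tree leaves a forest of rooted trees whose roots are the children of the root; the "subtrees hanging from" a set of children are the components of this forest rooted at those children. Vertices are compared by their integer labels. *)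

theory Defs
  imports Complex_Main
begin

definition adj :: "nat set set \<Rightarrow> nat \<Rightarrow> nat \<Rightarrow> bool" where
  "adj E u v \<longleftrightarrow> {u, v} \<in> E"

definition is_graph :: "nat set \<Rightarrow> nat set set \<Rightarrow> bool" where
  "is_graph V E \<longleftrightarrow> (\<forall>e\<in>E. \<exists>u v. e = {u, v} \<and> u \<in> V \<and> v \<in> V \<and> u \<noteq> v)"

definition reach :: "nat set set \<Rightarrow> (nat \<times> nat) set" where
  "reach E = {(x, y). adj E x y}\<^sup>*"

definition connected_graph :: "nat set \<Rightarrow> nat set set \<Rightarrow> bool" where
  "connected_graph V E \<longleftrightarrow> (\<forall>u\<in>V. \<forall>v\<in>V. (u, v) \<in> reach E)"

definition has_cycle :: "nat set \<Rightarrow> nat set set \<Rightarrow> bool" where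
  "has_cycle V E \<longleftrightarrow> (\<exists>cs. length cs \<ge> 3 \<and> distinct cs \<and> set cs \<subseteq> V \<and>
      (\<forall>j. j + 1 < length cs \<longrightarrow> adj E (cs ! j) (cs ! (j + 1))) \<and> adj E (last cs) (hd cs))"

definition is_tree :: "nat set \<Rightarrow> nat set set \<Rightarrow> bool" where
  "is_tree V E \<longleftrightarrow> is_graph V E \<and> connected_graph V E \<and> \<not> has_cycle V E"

definition children :: "nat set set \<Rightarrow> nat \<Rightarrow> nat set" where
  "children E r = {c. adj E r c}"

definition hanging_subtree :: "nat set \<Rightarrow> nat set set \<Rightarrow> nat \<Rightarrow> nat \<Rightarrow> nat set" where
  "hanging_subtree V E r c = {v \<in> V - {r}. (c, v) \<in> reach {e \<in> E. r \<notin> e}}"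

text \<open>T(n;i,k,l,m): rooted trees on {1..n+1} with root i (a rooted tree with fixed root i is
  determined by its edge set).\<close>

definition Tcount :: "nat \<Rightarrow> nat \<Rightarrow> nat \<Rightarrow> nat \<Rightarrow> nat \<Rightarrow> nat" where
  "Tcount n i k l m = card {E. is_tree {1..n+1} E
      \<and> card {c \<in> children E i. c < i} = k
      \<and> card {c \<in> children E i. c > i} = l
      \<and> card (\<Union>c\<in>{c \<in> children E i. c < i}. hanging_subtree {1..n+1} E i c) = m}"

end

theory Submission
  imports Defs "HOL-Library.FuncSet"
begin

definition frel :: "(nat \<Rightarrow> nat) \<Rightarrow> nat set \<Rightarrow> (nat \<times> nat) set" where
  "frel q D = {(v, q v) | v. v \<in> D}"

definition FF :: "nat set \<Rightarrow> nat set \<Rightarrow> (nat \<Rightarrow> nat) set" where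
  "FF W S = {q. q \<in> PiE (W - S) (\<lambda>_. W) \<and> (\<forall>v\<in>W. \<exists>s\<in>S. (v, s) \<in> (frel q (W - S))\<^sup>*)}"

lemma frel_mono: "(\<And>v. v \<in> D \<Longrightarrow> v \<in> D' \<and> q v = q' v) \<Longrightarrow> frel q D \<subseteq> frel q' D'"
  unfolding frel_def by force

lemma FF_split_into:
  assumes "s \<in> S" "S \<subseteq> W" "T \<subseteq> W - S" "q \<in> FF W S" "{v \<in> W - S. q v = s} = T"
  shows "restrict q (W - S - T) \<in> FF (W - {s}) ((S - {s}) \<union> T)"
proof -
  let ?q = "restrict q (W - S - T)"
  have D: "(W - {s}) - ((S - {s}) \<union> T) = W - S - T" using assms by auto
  have pi: "q \<in> PiE (W - S) (\<lambda>_. W)" and rr: "\<forall>v\<in>W. \<exists>t\<in>S. (v, t) \<in> (frel q (W - S))\<^sup>*"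
    using assms(4) unfolding FF_def by auto
  have "?q \<in> PiE (W - S - T) (\<lambda>_. W - {s})"
    using pi assms(5) by (auto simp: PiE_def Pi_def)
  moreover have "\<exists>s'\<in>(S - {s}) \<union> T. (v, s') \<in> (frel ?q (W - S - T))\<^sup>*"
    if "(v, t) \<in> (frel q (W - S))\<^sup>*" "t \<in> S" "v \<noteq> s" for v t
    using that
  proof (induction rule: converse_rtrancl_induct)
    case base
    then show ?case by blast
  next
    case (step v w)
    then have v: "v \<in> W - S" "w = q v" unfolding frel_def by auto
    show ?case
    proof (cases "v \<in> T")
      case True
      then show ?thesis by blast
    next
      case False
      then have "q v \<noteq> s" using assms(5) v by auto
      then have "\<exists>s'\<in>(S - {s}) \<union> T. (w, s') \<in> (frel ?q (W - S - T))\<^sup>*"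
        using step.IH step.prems v(2) by blast
      then obtain s' where s': "s' \<in> (S - {s}) \<union> T" "(w, s') \<in> (frel ?q (W - S - T))\<^sup>*"
        by blast
      have "(v, w) \<in> frel ?q (W - S - T)" using v False unfolding frel_def by auto
      then show ?thesis using s' by (meson converse_rtrancl_into_rtrancl)
    qed
  qed
  ultimately show ?thesis using rr unfolding FF_def D by fastforce
qed

lemma FF_split_onto:
  assumes "s \<in> S" "S \<subseteq> W" "T \<subseteq> W - S" "q' \<in> FF (W - {s}) ((S - {s}) \<union> T)"
  shows "\<exists>q. q \<in> FF W S \<and> {v \<in> W - S. q v = s} = T \<and> q' = restrict q (W - S - T)"
proof -
  have D: "(W - {s}) - ((S - {s}) \<union> T) = W - S - T" using assms by auto
  have pi: "q' \<in> PiE (W - S - T) (\<lambda>_. W - {s})"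
    and rr: "\<forall>v\<in>W - {s}. \<exists>t\<in>(S - {s}) \<union> T. (v, t) \<in> (frel q' (W - S - T))\<^sup>*"
    using assms(4) unfolding FF_def D by auto
  define q where "q = (\<lambda>v. if v \<in> T then s else if v \<in> W - S - T then q' v else undefined)"
  have qpi: "q \<in> PiE (W - S) (\<lambda>_. W)"
    using pi assms unfolding q_def by (auto simp: PiE_def Pi_def extensional_def)
  have pre: "{v \<in> W - S. q v = s} = T"
    using pi assms unfolding q_def by (auto simp: PiE_def Pi_def)
  have res: "q' = restrict q (W - S - T)"
    using pi unfolding q_def by (auto simp: PiE_def extensional_def restrict_def)
  have sub: "frel q' (W - S - T) \<subseteq> frel q (W - S)"
    by (rule frel_mono) (auto simp: q_def)
  have "\<exists>t\<in>S. (v, t) \<in> (frel q (W - S))\<^sup>*" if "v \<in> W" for v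
  proof (cases "v = s")
    case True
    then show ?thesis using assms by blast
  next
    case False
    then have "\<exists>t\<in>(S - {s}) \<union> T. (v, t) \<in> (frel q' (W - S - T))\<^sup>*"
      using rr that by blast
    then obtain t where t: "t \<in> (S - {s}) \<union> T" "(v, t) \<in> (frel q' (W - S - T))\<^sup>*"
      by blast
    then have vt: "(v, t) \<in> (frel q (W - S))\<^sup>*" using sub rtrancl_mono by blast
    show ?thesis
    proof (cases "t \<in> T")
      case True
      then have "(t, s) \<in> frel q (W - S)" using assms unfolding frel_def q_def by auto
      then show ?thesis using vt assms(1) by (meson rtrancl_into_rtrancl)
    next
      case False
      then show ?thesis using t vt by auto
    qed
  qed
  then have "q \<in> FF W S" using qpi unfolding FF_def by auto
  then show ?thesis using pre res by blast
qed

lemma FF_split_inj: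
  assumes "q1 \<in> PiE (W - S) (\<lambda>_. W)" "q2 \<in> PiE (W - S) (\<lambda>_. W)"
    "{v \<in> W - S. q1 v = s} = T" "{v \<in> W - S. q2 v = s} = T"
    "restrict q1 (W - S - T) = restrict q2 (W - S - T)"
  shows "q1 = q2"
proof
  fix v
  show "q1 v = q2 v"
  proof (cases "v \<in> W - S")
    case True
    show ?thesis
    proof (cases "v \<in> T")
      case True
      then have "q1 v = s" "q2 v = s" using assms(3,4) by blast+
      then show ?thesis by simp
    next
      case False
      then have "restrict q1 (W - S - T) v = restrict q2 (W - S - T) v" using assms(5) by simp
      then show ?thesis using False True by simp
    qed
  next
    case False
    then show ?thesis using assms(1,2) by (auto simp: PiE_def extensional_def)
  qed
qed

lemma FF_split_bij:
  assumes "s \<in> S" "S \<subseteq> W" "T \<subseteq> W - S"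
  shows "bij_betw (\<lambda>q. restrict q (W - S - T)) {q \<in> FF W S. {v \<in> W - S. q v = s} = T}
           (FF (W - {s}) ((S - {s}) \<union> T))"
  unfolding bij_betw_def
proof
  show "inj_on (\<lambda>q. restrict q (W - S - T)) {q \<in> FF W S. {v \<in> W - S. q v = s} = T}"
    by (rule inj_onI) (rule FF_split_inj, auto simp: FF_def)
  show "(\<lambda>q. restrict q (W - S - T)) ` {q \<in> FF W S. {v \<in> W - S. q v = s} = T} =
    FF (W - {s}) (S - {s} \<union> T)"
    using FF_split_into[OF assms] FF_split_onto[OF assms] by blast
qed

lemma finite_FF: "finite W \<Longrightarrow> finite (FF W S)"
  by (rule finite_subset[of _ "PiE (W - S) (\<lambda>_. W)"]) (auto simp: FF_def intro: finite_PiE)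

lemma card_FF_rec:
  assumes "finite W" "s \<in> S" "S \<subseteq> W"
  shows "card (FF W S) = (\<Sum>T\<in>Pow (W - S). card (FF (W - {s}) ((S - {s}) \<union> T)))"
proof -
  define X where "X T = {q \<in> FF W S. {v \<in> W - S. q v = s} = T}" for T
  have eq: "FF W S = (\<Union>T\<in>Pow (W - S). X T)"
  proof
    show "FF W S \<subseteq> (\<Union>T\<in>Pow (W - S). X T)"
    proof
      fix q assume q: "q \<in> FF W S"
      have "{v \<in> W - S. q v = s} \<in> Pow (W - S)" by blast
      moreover have "q \<in> X {v \<in> W - S. q v = s}" using q unfolding X_def by blast
      ultimately show "q \<in> (\<Union>T\<in>Pow (W - S). X T)" by blast
    qed
    show "(\<Union>T\<in>Pow (W - S). X T) \<subseteq> FF W S" unfolding X_def by blast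
  qed
  have fin: "finite (X T)" for T
  proof (rule finite_subset)
    show "X T \<subseteq> FF W S" unfolding X_def by blast
    show "finite (FF W S)" using assms(1) by (rule finite_FF)
  qed
  have dis: "X T \<inter> X T' = {}" if "T \<noteq> T'" for T T'
    using that unfolding X_def by blast
  have "card (\<Union>T\<in>Pow (W - S). X T) = (\<Sum>T\<in>Pow (W - S). card (X T))"
  proof (rule card_UN_disjoint)
    show "finite (Pow (W - S))" using assms(1) by simp
  qed (use fin dis in blast)+
  then have "card (FF W S) = (\<Sum>T\<in>Pow (W - S). card (X T))" using eq by simp
  also have "\<dots> = (\<Sum>T\<in>Pow (W - S). card (FF (W - {s}) ((S - {s}) \<union> T)))"
  proof (rule sum.cong[OF refl])
    fix T assume "T \<in> Pow (W - S)"
    then have "T \<subseteq> W - S" by simp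
    then show "card (X T) = card (FF (W - {s}) ((S - {s}) \<union> T))"
      unfolding X_def by (rule bij_betw_same_card[OF FF_split_bij[OF assms(2,3)]])
  qed
  finally show ?thesis .
qed

lemma sum_pow_binom:
  fixes y :: real
  assumes "finite U"
  shows "(\<Sum>T\<in>Pow U. y ^ (card U - card T)) = (1 + y) ^ card U"
  using assms
proof (induction U rule: finite_induct)
  case empty
  then show ?case by simp
next
  case (insert x U)
  have fin: "finite (Pow U)" using insert by simp
  have dis: "Pow U \<inter> insert x ` Pow U = {}" using insert by auto
  have inj: "inj_on (insert x) (Pow U)"
  proof (rule inj_onI)
    fix A B assume "A \<in> Pow U" "B \<in> Pow U" "insert x A = insert x B"
    then show "A = B" using insert(2) insert_ident by (metis PowD subsetD)
  qed
  have c1: "\<And>T. T \<in> Pow U \<Longrightarrow> card (insert x T) = Suc (card T)"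
    using insert by (meson PowD finite_subset card_insert_disjoint subsetD)
  have c2: "\<And>T. T \<in> Pow U \<Longrightarrow> card T \<le> card U"
    using insert by (simp add: card_mono)
  have "(\<Sum>T\<in>Pow (insert x U). y ^ (card (insert x U) - card T))
      = (\<Sum>T\<in>Pow U. y ^ (Suc (card U) - card T)) + (\<Sum>T\<in>insert x ` Pow U. y ^ (Suc (card U) - card T))"
    using insert fin dis by (simp add: Pow_insert sum.union_disjoint)
  also have "(\<Sum>T\<in>Pow U. y ^ (Suc (card U) - card T)) = y * (\<Sum>T\<in>Pow U. y ^ (card U - card T))"
    by (simp add: sum_distrib_left c2 Suc_diff_le)
  also have "(\<Sum>T\<in>insert x ` Pow U. y ^ (Suc (card U) - card T)) = (\<Sum>T\<in>Pow U. y ^ (card U - card T))"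
    by (simp add: sum.reindex[OF inj] c1)
  finally show ?case using insert by (simp add: algebra_simps)
qed

lemma sum_pow_binom_card:
  fixes y a :: real
  assumes "finite U"
  shows "(1 + y) * (\<Sum>T\<in>Pow U. (a + real (card T)) * y ^ (card U - card T))
       = (1 + y) ^ card U * ((1 + y) * a + real (card U))"
  using assms
proof (induction U rule: finite_induct)
  case empty
  then show ?case by simp
next
  case (insert x U)
  have fin: "finite (Pow U)" using insert by simp
  have dis: "Pow U \<inter> insert x ` Pow U = {}" using insert by auto
  have inj: "inj_on (insert x) (Pow U)"
  proof (rule inj_onI)
    fix A B assume "A \<in> Pow U" "B \<in> Pow U" "insert x A = insert x B"
    then show "A = B" using insert(2) insert_ident by (metis PowD subsetD)
  qed
  have c1: "\<And>T. T \<in> Pow U \<Longrightarrow> card (insert x T) = Suc (card T)"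
    using insert by (meson PowD finite_subset card_insert_disjoint subsetD)
  have c2: "\<And>T. T \<in> Pow U \<Longrightarrow> card T \<le> card U"
    using insert by (simp add: card_mono)
  define A where "A = (\<Sum>T\<in>Pow U. (a + real (card T)) * y ^ (card U - card T))"
  define B where "B = (\<Sum>T\<in>Pow U. y ^ (card U - card T))"
  have B: "B = (1 + y) ^ card U" unfolding B_def by (rule sum_pow_binom[OF insert(1)])
  have "(\<Sum>T\<in>Pow (insert x U). (a + real (card T)) * y ^ (card (insert x U) - card T))
      = (\<Sum>T\<in>Pow U. (a + real (card T)) * y ^ (Suc (card U) - card T))
        + (\<Sum>T\<in>insert x ` Pow U. (a + real (card T)) * y ^ (Suc (card U) - card T))"
    using insert fin dis by (simp add: Pow_insert sum.union_disjoint)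
  also have "(\<Sum>T\<in>Pow U. (a + real (card T)) * y ^ (Suc (card U) - card T)) = y * A"
    unfolding A_def by (simp add: sum_distrib_left c2 Suc_diff_le algebra_simps)
  also have "(\<Sum>T\<in>insert x ` Pow U. (a + real (card T)) * y ^ (Suc (card U) - card T)) = A + B"
    unfolding A_def B_def by (simp add: sum.reindex[OF inj] c1 sum.distrib algebra_simps)
  finally have eq: "(\<Sum>T\<in>Pow (insert x U). (a + real (card T)) * y ^ (card (insert x U) - card T)) = y * A + (A + B)" .
  have IH: "(1 + y) * A = (1 + y) ^ card U * ((1 + y) * a + real (card U))"
    using insert.IH unfolding A_def .
  have "(1 + y) * (y * A + (A + B)) = (1 + y) * ((1 + y) * A) + (1 + y) * B"
    by (simp add: algebra_simps)
  also have "\<dots> = (1 + y) ^ Suc (card U) * ((1 + y) * a + real (Suc (card U)))"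
    unfolding IH B by (simp add: algebra_simps)
  finally show ?case using eq insert by simp
qed


lemma FF_empty_roots: "W \<noteq> {} \<Longrightarrow> FF W {} = {}"
  unfolding FF_def by auto

lemma FF_all_roots: "FF W W = {\<lambda>_. undefined}"
  unfolding FF_def by auto

theorem card_FF:
  assumes "finite W" "W \<noteq> {}" "S \<subseteq> W"
  shows "real (card (FF W S)) * real (card W) = real (card S) * real (card W) ^ (card W - card S)"
  using assms
proof (induction "card W" arbitrary: W S rule: less_induct)
  case less
  define n where "n = card W"
  define d where "d = card S"
  have n1: "n \<ge> 1" using less.prems n_def by (simp add: Suc_le_eq card_gt_0_iff)
  have dn: "d \<le> n" using less.prems unfolding n_def d_def by (simp add: card_mono)
  show ?case
  proof (cases "S = {}")
    case True
    then show ?thesis using less.prems FF_empty_roots by simp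
  next
    case Sne: False
    show ?thesis
    proof (cases "S = W")
      case True
      then show ?thesis using FF_all_roots by simp
    next
      case False
      obtain s where s: "s \<in> S" using Sne by blast
      obtain w where w: "w \<in> W" "w \<notin> S" using False less.prems by blast
      have d1: "d \<ge> 1" using Sne less.prems unfolding d_def
        by (meson card_0_eq finite_subset less_one not_less)
      have cW': "card (W - {s}) = n - 1" using s less.prems n_def by auto
      have n2: "n \<ge> 2"
      proof -
        have "{s, w} \<subseteq> W" using s w less.prems by auto
        then have "card {s, w} \<le> n" using less.prems n_def card_mono by blast
        moreover have "s \<noteq> w" using s w by auto
        then have "card {s, w} = 2" by simp
        ultimately show ?thesis by linarith
      qed
      have cU: "card (W - S) = n - d" using less.prems unfolding n_def d_def
        by (meson card_Diff_subset finite_subset)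
      have IH: "real (card (FF (W - {s}) ((S - {s}) \<union> T))) * real (n - 1)
          = (real d - 1 + real (card T)) * real (n - 1) ^ (card (W - S) - card T)"
        if T: "T \<in> Pow (W - S)" for T
      proof -
        have fT: "finite T" using T less.prems finite_subset by blast
        have cS': "card ((S - {s}) \<union> T) = d - 1 + card T"
        proof -
          have "card ((S - {s}) \<union> T) = card (S - {s}) + card T"
            using T less.prems fT by (intro card_Un_disjoint) (auto intro: finite_subset)
          then show ?thesis using s less.prems d_def
            by (metis card_Diff_singleton finite_subset)
        qed
        have "real (card (FF (W - {s}) ((S - {s}) \<union> T))) * real (card (W - {s}))
           = real (card ((S - {s}) \<union> T)) * real (card (W - {s})) ^ (card (W - {s}) - card ((S - {s}) \<union> T))"
          using T s w less.prems cW' n2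
          by (intro less.hyps) (auto simp: n_def)
        moreover have "card (W - {s}) - card ((S - {s}) \<union> T) = card (W - S) - card T"
          using cW' cS' cU d1 by simp
        ultimately show ?thesis using cW' cS' d1 by (simp add: of_nat_diff)
      qed
      have rec: "card (FF W S) = (\<Sum>T\<in>Pow (W - S). card (FF (W - {s}) ((S - {s}) \<union> T)))"
        using card_FF_rec[OF less.prems(1) s less.prems(3)] .
      have "real (card (FF W S)) * real (n - 1)
          = (\<Sum>T\<in>Pow (W - S). (real d - 1 + real (card T)) * real (n - 1) ^ (card (W - S) - card T))"
        unfolding rec of_nat_sum sum_distrib_right using IH by (intro sum.cong) auto
      then have "real n * (real (card (FF W S)) * real (n - 1))
          = (1 + real (n - 1)) * (\<Sum>T\<in>Pow (W - S). (real d - 1 + real (card T)) * real (n - 1) ^ (card (W - S) - card T))"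
        using n1 by (simp add: of_nat_diff)
      also have "\<dots> = (1 + real (n - 1)) ^ card (W - S) * ((1 + real (n - 1)) * (real d - 1) + real (card (W - S)))"
        by (rule sum_pow_binom_card) (use less.prems in auto)
      also have "\<dots> = real n ^ (n - d) * (real d * (real n - 1))"
        using n1 dn cU by (simp add: of_nat_diff algebra_simps)
      finally have "(real (card (FF W S)) * real n) * (real n - 1) = (real d * real n ^ (n - d)) * (real n - 1)"
        using n1 by (simp add: of_nat_diff algebra_simps)
      then have "real (card (FF W S)) * real n = real d * real n ^ (n - d)"
        using n2 by simp
      then show ?thesis unfolding n_def d_def .
    qed
  qed
qed


lemma adj_sym: "adj E a b \<longleftrightarrow> adj E b a"
  unfolding adj_def by (simp add: insert_commute)

lemma reach_sym: "(x, y) \<in> reach E \<Longrightarrow> (y, x) \<in> reach E"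
  unfolding reach_def
proof (induction rule: rtrancl_induct)
  case base
  then show ?case by simp
next
  case (step y z)
  then have "(z, y) \<in> {(x, y). adj E x y}" by (simp add: adj_sym)
  then show ?case using step.IH by (meson converse_rtrancl_into_rtrancl)
qed

lemma reach_trans: "(x, y) \<in> reach E \<Longrightarrow> (y, z) \<in> reach E \<Longrightarrow> (x, z) \<in> reach E"
  unfolding reach_def by simp

lemma reach_mono: "E \<subseteq> E' \<Longrightarrow> (x, y) \<in> reach E \<Longrightarrow> (x, y) \<in> reach E'"
  unfolding reach_def
  by (rule rtrancl_mono[THEN subsetD]) (auto simp: adj_def)

lemma reach_step: "adj E x y \<Longrightarrow> (x, y) \<in> reach E"
  unfolding reach_def by auto

lemma has_cycle_mono:
  assumes "has_cycle V E" "V \<subseteq> V'" "E \<subseteq> E'"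
  shows "has_cycle V' E'"
proof -
  obtain cs where cs: "length cs \<ge> 3" "distinct cs" "set cs \<subseteq> V"
      "\<forall>j. j + 1 < length cs \<longrightarrow> adj E (cs ! j) (cs ! (j + 1))" "adj E (last cs) (hd cs)"
    using assms(1) unfolding has_cycle_def by blast
  have m: "\<And>a b. adj E a b \<Longrightarrow> adj E' a b" using assms(3) by (auto simp: adj_def)
  show ?thesis unfolding has_cycle_def
    using cs assms(2) m by (intro exI[of _ cs]) auto
qed

lemma graph_adj: "is_graph V E \<Longrightarrow> adj E a b \<Longrightarrow> a \<in> V \<and> b \<in> V \<and> a \<noteq> b"
  unfolding is_graph_def adj_def
proof -
  assume g: "\<forall>e\<in>E. \<exists>u v. e = {u, v} \<and> u \<in> V \<and> v \<in> V \<and> u \<noteq> v" and e: "{a, b} \<in> E"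
  then obtain u v where uv: "{a, b} = {u, v}" "u \<in> V" "v \<in> V" "u \<noteq> v" by blast
  then show "a \<in> V \<and> b \<in> V \<and> a \<noteq> b" by (auto simp: doubleton_eq_iff)
qed


lemma cycle_two_nbrs:
  assumes "length cs \<ge> 3" "distinct cs"
    "\<forall>j. j + 1 < length cs \<longrightarrow> adj E (cs ! j) (cs ! (j + 1))" "adj E (last cs) (hd cs)"
    "j < length cs"
  shows "\<exists>a b. a \<noteq> b \<and> adj E (cs ! j) a \<and> adj E (cs ! j) b"
proof -
  define L where "L = length cs"
  define nx where "nx = (if j + 1 < L then j + 1 else 0)"
  define pv where "pv = (if j = 0 then L - 1 else j - 1)"
  have ne: "cs \<noteq> []" using assms by auto
  have lastc: "last cs = cs ! (L - 1)" and hdc: "hd cs = cs ! 0"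
    using ne by (auto simp: L_def last_conv_nth hd_conv_nth)
  have a1: "adj E (cs ! j) (cs ! nx)"
  proof (cases "j + 1 < L")
    case True
    then show ?thesis using assms(3) by (simp add: nx_def L_def)
  next
    case False
    then have "j = L - 1" using assms(5) L_def by simp
    then show ?thesis using False assms(4) lastc hdc by (simp add: nx_def)
  qed
  have a2: "adj E (cs ! pv) (cs ! j)"
  proof (cases "j = 0")
    case True
    then show ?thesis using assms(4) lastc hdc by (simp add: pv_def)
  next
    case False
    then have "(j - 1) + 1 < L" using assms(5) L_def by simp
    then have "adj E (cs ! (j - 1)) (cs ! (j - 1 + 1))" using assms(3) L_def by blast
    then show ?thesis using False by (simp add: pv_def)
  qed
  have idx: "nx < L" "pv < L" "nx \<noteq> pv" using assms(1,5) unfolding nx_def pv_def L_def by auto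
  then have "cs ! nx \<noteq> cs ! pv" using assms(2) by (simp add: L_def nth_eq_iff_index_eq)
  then show ?thesis using a1 a2 adj_sym by metis
qed


lemma tree_add_leaf:
  assumes "is_tree V E" "u \<in> V" "v \<notin> V"
  shows "is_tree (insert v V) (insert {v, u} E)"
proof -
  let ?E = "insert {v, u} E"
  have g: "is_graph V E" and c: "connected_graph V E" and nc: "\<not> has_cycle V E"
    using assms(1) unfolding is_tree_def by auto
  have uv: "u \<noteq> v" using assms by auto
  have g2: "is_graph (insert v V) ?E" unfolding is_graph_def
  proof
    fix e assume "e \<in> ?E"
    then consider "e = {v, u}" | "e \<in> E" by blast
    then show "\<exists>a b. e = {a, b} \<and> a \<in> insert v V \<and> b \<in> insert v V \<and> a \<noteq> b"
    proof cases
      case 1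
      then show ?thesis using uv assms(2) by blast
    next
      case 2
      then obtain a b where "e = {a, b}" "a \<in> V" "b \<in> V" "a \<noteq> b" using g unfolding is_graph_def by blast
      then show ?thesis by blast
    qed
  qed
  have ru: "(x, u) \<in> reach ?E" if "x \<in> insert v V" for x
  proof (cases "x = v")
    case True
    then show ?thesis by (intro reach_step) (simp add: adj_def)
  next
    case False
    then have "(x, u) \<in> reach E" using c that assms unfolding connected_graph_def by auto
    then show ?thesis by (rule reach_mono[rotated]) auto
  qed
  have c2: "connected_graph (insert v V) ?E"
    unfolding connected_graph_def
  proof (intro ballI)
    fix x y assume "x \<in> insert v V" "y \<in> insert v V"
    then have "(x, u) \<in> reach ?E" "(u, y) \<in> reach ?E" using ru reach_sym by auto
    then show "(x, y) \<in> reach ?E" by (rule reach_trans)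
  qed
  have nc2: "\<not> has_cycle (insert v V) ?E"
  proof
    assume "has_cycle (insert v V) ?E"
    then obtain cs where cs: "length cs \<ge> 3" "distinct cs" "set cs \<subseteq> insert v V"
      "\<forall>j. j + 1 < length cs \<longrightarrow> adj ?E (cs ! j) (cs ! (j + 1))" "adj ?E (last cs) (hd cs)"
      unfolding has_cycle_def by blast
    show False
    proof (cases "v \<in> set cs")
      case True
      then obtain j where j: "j < length cs" "cs ! j = v" by (meson in_set_conv_nth)
      obtain a b where ab: "a \<noteq> b" "adj ?E v a" "adj ?E v b"
        using cycle_two_nbrs[OF cs(1,2,4,5) j(1)] j(2) by blast
      have "a = u" if "adj ?E v a" for a
      proof -
        have "{v, a} = {v, u} \<or> {v, a} \<in> E" using that by (simp add: adj_def)
        then show ?thesis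
          using g assms(3) graph_adj[of V E v a] by (auto simp: adj_def doubleton_eq_iff)
      qed
      then show False using ab by metis
    next
      case False
      have adjE: "adj E a b" if "adj ?E a b" "a \<noteq> v" "b \<noteq> v" for a b
        using that by (auto simp: adj_def doubleton_eq_iff)
      moreover have "\<forall>x\<in>set cs. x \<noteq> v" using False by auto
      moreover have ne: "cs \<noteq> []" using cs(1) by auto
      ultimately have "has_cycle V E" unfolding has_cycle_def
      proof (intro exI[of _ cs] conjI allI impI)
        show "set cs \<subseteq> V" using cs(3) False by auto
        fix j assume j: "j + 1 < length cs"
        then have "cs ! j \<in> set cs" "cs ! (j + 1) \<in> set cs" by simp_all
        then have "cs ! j \<noteq> v" "cs ! (j + 1) \<noteq> v" using False by auto
        then show "adj E (cs ! j) (cs ! (j + 1))" using cs(4) j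
          using adjE by blast
      next
        have "last cs \<noteq> v" "hd cs \<noteq> v" using ne False last_in_set hd_in_set by metis+
        then show "adj E (last cs) (hd cs)" using cs(5)
          using adjE by blast
      qed (use cs in auto)
      then show False using nc by simp
    qed
  qed
  show ?thesis using g2 c2 nc2 unfolding is_tree_def by simp
qed


lemma tree_remove_leaf:
  assumes "is_tree V E" "adj E v u" "\<forall>w. adj E v w \<longrightarrow> w = u"
  shows "is_tree (V - {v}) (E - {{v, u}})"
proof -
  let ?E = "E - {{v, u}}"
  have g: "is_graph V E" and c: "connected_graph V E" and nc: "\<not> has_cycle V E"
    using assms(1) unfolding is_tree_def by auto
  have uv: "u \<noteq> v" "u \<in> V" "v \<in> V" using graph_adj[OF g assms(2)] by auto
  have g2: "is_graph (V - {v}) ?E"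
    unfolding is_graph_def
  proof
    fix e assume e: "e \<in> ?E"
    then obtain a b where ab: "e = {a, b}" "a \<in> V" "b \<in> V" "a \<noteq> b" using g unfolding is_graph_def by blast
    have "a \<noteq> v"
    proof
      assume "a = v"
      then have "adj E v b" using e ab by (simp add: adj_def)
      then show False using assms(3) e ab \<open>a = v\<close> by auto
    qed
    moreover have "b \<noteq> v"
    proof
      assume "b = v"
      then have "adj E v a" using e ab by (simp add: adj_def insert_commute)
      then show False using assms(3) e ab \<open>b = v\<close> by (auto simp: insert_commute)
    qed
    ultimately show "\<exists>a b. e = {a, b} \<and> a \<in> V - {v} \<and> b \<in> V - {v} \<and> a \<noteq> b" using ab by blast
  qed
  have key: "(x, y) \<in> reach ?E \<or> (y = v \<and> (x, u) \<in> reach ?E)"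
    if "(x, y) \<in> reach E" "x \<noteq> v" for x y
    using that(1) unfolding reach_def[of E]
  proof (induction rule: rtrancl_induct)
    case base
    then show ?case by (simp add: reach_def)
  next
    case (step y z)
    then have yz: "adj E y z" by simp
    from step.IH show ?case
    proof
      assume xy: "(x, y) \<in> reach ?E"
      show ?thesis
      proof (cases "z = v")
        case True
        then have "y = u" using yz assms(3) adj_sym by metis
        then show ?thesis using xy True by simp
      next
        case False
        have iso: "\<not> adj ?E w v" for w
        proof
          assume "adj ?E w v"
          then have "{w, v} \<in> E" "{w, v} \<noteq> {v, u}" by (auto simp: adj_def)
          moreover have "adj E v w" using \<open>{w, v} \<in> E\<close> by (simp add: adj_def insert_commute)
          then have "w = u" using assms(3) by blast
          ultimately show False by (simp add: insert_commute)
        qed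
        have "y \<noteq> v"
        proof
          assume "y = v"
          then have "(x, v) \<in> {(a, b). adj ?E a b}\<^sup>*" using xy by (simp add: reach_def)
          then show False
          proof (cases rule: rtranclE)
            case base
            then show ?thesis using that(2) by simp
          next
            case (step w)
            then show ?thesis using iso by simp
          qed
        qed
        then have "adj ?E y z" using yz False by (auto simp: adj_def doubleton_eq_iff)
        then show ?thesis using xy reach_step reach_trans by blast
      qed
    next
      assume "y = v \<and> (x, u) \<in> reach ?E"
      then show ?thesis using yz assms(3) by auto
    qed
  qed
  have c2: "connected_graph (V - {v}) ?E"
    unfolding connected_graph_def using key c unfolding connected_graph_def by blast
  have nc2: "\<not> has_cycle (V - {v}) ?E"
    using nc has_cycle_mono[of "V - {v}" ?E V E] by blast
  show ?thesis using g2 c2 nc2 unfolding is_tree_def by simp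
qed


lemma tree_leaf:
  assumes "is_tree V E" "finite V" "r \<in> V" "V \<noteq> {r}"
  shows "\<exists>v\<in>V - {r}. \<exists>u. adj E v u \<and> (\<forall>w. adj E v w \<longrightarrow> w = u)"
proof -
  have g: "is_graph V E" and c: "connected_graph V E" and nc: "\<not> has_cycle V E"
    using assms(1) unfolding is_tree_def by auto
  define P where "P = {cs. cs \<noteq> [] \<and> hd cs = r \<and> distinct cs \<and> set cs \<subseteq> V \<and>
      (\<forall>j. j + 1 < length cs \<longrightarrow> adj E (cs ! j) (cs ! (j + 1)))}"
  have "P \<subseteq> {cs. set cs \<subseteq> V \<and> length cs \<le> card V}"
  proof
    fix cs assume "cs \<in> P"
    then have "distinct cs" "set cs \<subseteq> V" unfolding P_def by auto
    then have "length cs \<le> card V" using assms(2) by (metis card_mono distinct_card)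
    then show "cs \<in> {cs. set cs \<subseteq> V \<and> length cs \<le> card V}" using \<open>set cs \<subseteq> V\<close> by simp
  qed
  then have finP: "finite P" using finite_lists_length_le[OF assms(2)] finite_subset by blast
  have rP: "[r] \<in> P" using assms(3) unfolding P_def by simp
  have ext: "cs @ [w] \<in> P" if cs: "cs \<in> P" and a: "adj E (last cs) w" and w: "w \<notin> set cs" for cs w
  proof -
    have wV: "w \<in> V" using graph_adj[OF g a] by simp
    have ne: "cs \<noteq> []" using cs P_def by simp
    have "adj E ((cs @ [w]) ! j) ((cs @ [w]) ! (j + 1))" if j: "j + 1 < length (cs @ [w])" for j
    proof (cases "j + 1 < length cs")
      case True
      then show ?thesis using cs unfolding P_def by (simp add: nth_append)
    next
      case False
      then have "j = length cs - 1" using j by simp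
      then show ?thesis using a ne by (simp add: nth_append last_conv_nth)
    qed
    then show ?thesis using cs w wV ne unfolding P_def by auto
  qed
  let ?M = "Max (length ` P)"
  have "?M \<in> length ` P" using finP rP by (intro Max_in) auto
  then obtain cs where cs: "cs \<in> P" "length cs = ?M" by auto
  have maxl: "length c \<le> length cs" if "c \<in> P" for c
    using cs(2) finP that by (metis Max_ge finite_imageI image_eqI)
  have csP: "cs \<noteq> []" "hd cs = r" "distinct cs" "set cs \<subseteq> V"
    "\<forall>j. j + 1 < length cs \<longrightarrow> adj E (cs ! j) (cs ! (j + 1))" using cs(1) unfolding P_def by auto
  define L where "L = length cs"
  have L2: "L \<ge> 2"
  proof (rule ccontr)
    assume "\<not> L \<ge> 2"
    moreover have "L \<noteq> 0" using csP(1) L_def by simp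
    ultimately have "L = 1" by linarith
    then have cr: "cs = [r]" using csP(1,2) L_def by (cases cs) (auto simp: length_Suc_conv)
    obtain y where y: "y \<in> V" "y \<noteq> r" using assms(3,4) by blast
    then have "(r, y) \<in> {(a, b). adj E a b}\<^sup>*" using c assms(3) unfolding connected_graph_def reach_def by blast
    then obtain z where z: "adj E r z"
      by (cases rule: converse_rtranclE) (use y in auto)
    then have "z \<noteq> r" using graph_adj[OF g] by blast
    then have "[r] @ [z] \<in> P" using ext[OF rP] z by simp
    then have "length ([r] @ [z]) \<le> length cs" by (rule maxl)
    then show False using cr by simp
  qed
  define x where "x = last cs"
  define pr where "pr = cs ! (L - 2)"
  have xn: "x = cs ! (L - 1)" using csP(1) unfolding x_def L_def by (simp add: last_conv_nth)
  have "L - 2 + 1 < length cs" using L2 L_def by simp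
  then have "adj E (cs ! (L - 2)) (cs ! (L - 2 + 1))" using csP(5) by blast
  moreover have "L - 2 + 1 = L - 1" using L2 by simp
  ultimately have "adj E pr x" using xn unfolding pr_def by simp
  then have apx: "adj E x pr" using adj_sym[of E pr x] by blast
  have xr: "x \<noteq> r"
  proof
    assume "x = r"
    have h0: "hd cs = cs ! 0" using csP(1) by (rule hd_conv_nth)
    have "cs ! (L - 1) = cs ! 0" using xn \<open>x = r\<close> csP(2) h0 by argo
    moreover have "L - 1 < length cs" "0 < length cs" "L - 1 \<noteq> 0" using L2 L_def by auto
    ultimately show False using csP(3) by (simp add: nth_eq_iff_index_eq)
  qed
  have "x \<in> set cs" using csP(1) unfolding x_def by (rule last_in_set)
  then have xV: "x \<in> V" using csP(4) by blast
  have uniq: "w = pr" if a: "adj E x w" for w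
  proof (rule ccontr)
    assume wp: "w \<noteq> pr"
    show False
    proof (cases "w \<in> set cs")
      case False
      have "adj E (last cs) w" using a unfolding x_def .
      then have "cs @ [w] \<in> P" by (rule ext[OF cs(1) _ False])
      then have "length (cs @ [w]) \<le> length cs" by (rule maxl)
      then show False by simp
    next
      case True
      then obtain j where j: "j < L" "cs ! j = w" unfolding L_def in_set_conv_nth by blast
      have "w \<noteq> x" using graph_adj[OF g a] by simp
      then have "j \<noteq> L - 1" using j xn by auto
      moreover have "j \<noteq> L - 2" using j wp pr_def by auto
      ultimately have j3: "j + 3 \<le> L" using j L2 by linarith
      define cy where "cy = drop j cs"
      have "has_cycle V E" unfolding has_cycle_def
      proof (intro exI[of _ cy] conjI allI impI)
        show "3 \<le> length cy" using j3 L_def cy_def by simp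
        show "distinct cy" using csP(3) cy_def by simp
        show "set cy \<subseteq> V" using csP(4) unfolding cy_def by (auto dest: in_set_dropD)
        fix i assume "i + 1 < length cy"
        then have "j + i + 1 < length cs" using cy_def by simp
        then have "adj E (cs ! (j + i)) (cs ! (j + i + 1))" using csP(5) by blast
        then show "adj E (cy ! i) (cy ! (i + 1))" using cy_def j L_def by simp
      next
        have "last cy = x" using j unfolding L_def cy_def x_def by (simp add: last_drop)
        moreover have "hd cy = w" using j L_def cy_def by (simp add: hd_drop_conv_nth)
        ultimately show "adj E (last cy) (hd cy)" using a by simp
      qed
      then show False using nc by simp
    qed
  qed
  show ?thesis
  proof (rule bexI[of _ x])
    show "\<exists>u. adj E x u \<and> (\<forall>w. adj E x w \<longrightarrow> w = u)" using apx uniq by blast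
    show "x \<in> V - {r}" using xr xV by simp
  qed
qed


definition Edges :: "(nat \<Rightarrow> nat) \<Rightarrow> nat set \<Rightarrow> nat \<Rightarrow> nat set set" where
  "Edges p V r = (\<lambda>v. {v, p v}) ` (V - {r})"

lemma closed_reach:
  assumes "(a, b) \<in> (frel q D)\<^sup>*" "a \<in> C" "\<And>v. v \<in> C \<Longrightarrow> v \<in> D \<Longrightarrow> q v \<in> C"
  shows "b \<in> C"
  using assms(1,2)
proof (induction rule: rtrancl_induct)
  case base
  then show ?case .
next
  case (step y z)
  then show ?case using assms(3) unfolding frel_def by auto
qed

lemma FF_reach: "p \<in> FF V {r} \<Longrightarrow> v \<in> V \<Longrightarrow> (v, r) \<in> (frel p (V - {r}))\<^sup>*"
  unfolding FF_def by auto

lemma FF_pi: "p \<in> FF V {r} \<Longrightarrow> p \<in> PiE (V - {r}) (\<lambda>_. V)"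
  unfolding FF_def by auto

lemma FF_no_fix:
  assumes "p \<in> FF V {r}" "v \<in> V - {r}"
  shows "p v \<noteq> v"
proof
  assume pv: "p v = v"
  have "(v, r) \<in> (frel p (V - {r}))\<^sup>*" using FF_reach assms by blast
  then have "r \<in> {v}" by (rule closed_reach) (use pv in auto)
  then show False using assms by auto
qed

lemma FF_leaf_exists:
  assumes "finite V" "r \<in> V" "V \<noteq> {r}" "p \<in> FF V {r}"
  shows "\<exists>v\<in>V - {r}. \<forall>u\<in>V - {r}. p u \<noteq> v"
proof (rule ccontr)
  assume nt: "\<not> (\<exists>v\<in>V - {r}. \<forall>u\<in>V - {r}. p u \<noteq> v)"
  have all: "V - {r} \<subseteq> p ` (V - {r})"
  proof
    fix x assume "x \<in> V - {r}"
    then obtain u where "u \<in> V - {r}" "p u = x" using nt by blast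
    then show "x \<in> p ` (V - {r})" by blast
  qed
  obtain x where x: "x \<in> V" "x \<noteq> r" using assms(2,3) by blast
  have "(x, r) \<in> (frel p (V - {r}))\<^sup>*" using FF_reach assms(4) x by blast
  then have "r \<in> p ` (V - {r})"
  proof (cases rule: rtranclE)
    case base
    then show ?thesis using x by simp
  next
    case (step y)
    then show ?thesis unfolding frel_def by auto
  qed
  then have "V \<subseteq> p ` (V - {r})" using all by blast
  then have "card V \<le> card (p ` (V - {r}))" using assms(1) by (simp add: card_mono)
  also have "\<dots> \<le> card (V - {r})" using assms(1) by (simp add: card_image_le)
  also have "\<dots> < card V"
  proof -
    have "card V > 0" using assms(1,2) card_gt_0_iff by blast
    then show ?thesis using assms(1,2) by simp
  qed
  finally show False by simp
qed

lemma FF_remove_leaf: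
  assumes "p \<in> FF V {r}" "v \<in> V - {r}" "\<forall>u\<in>V - {r}. p u \<noteq> v"
  shows "restrict p (V - {v} - {r}) \<in> FF (V - {v}) {r}"
proof -
  let ?p = "restrict p (V - {v} - {r})"
  have pi: "p \<in> PiE (V - {r}) (\<lambda>_. V)" using FF_pi assms by blast
  have "?p \<in> PiE (V - {v} - {r}) (\<lambda>_. V - {v})"
    using pi assms(3) by (auto simp: PiE_def Pi_def)
  moreover have "(u, r) \<in> (frel ?p (V - {v} - {r}))\<^sup>*"
    if "(u, r) \<in> (frel p (V - {r}))\<^sup>*" "u \<noteq> v" for u
    using that
  proof (induction rule: converse_rtrancl_induct)
    case base
    then show ?case by simp
  next
    case (step u w)
    then have u: "u \<in> V - {r}" "w = p u" unfolding frel_def by auto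
    then have "w \<noteq> v" using assms(3) by auto
    then have "(w, r) \<in> (frel ?p (V - {v} - {r}))\<^sup>*" using step.IH by blast
    moreover have "(u, w) \<in> frel ?p (V - {v} - {r})" using u step.prems unfolding frel_def by auto
    ultimately show ?case by (meson converse_rtrancl_into_rtrancl)
  qed
  ultimately show ?thesis using FF_reach[OF assms(1)] unfolding FF_def by auto
qed

lemma Edges_remove_leaf:
  assumes "p \<in> FF V {r}" "v \<in> V - {r}" "\<forall>u\<in>V - {r}. p u \<noteq> v"
  shows "Edges p V r = insert {v, p v} (Edges (restrict p (V - {v} - {r})) (V - {v}) r)"
    and "{v, p v} \<notin> Edges (restrict p (V - {v} - {r})) (V - {v}) r"
proof -
  have e: "Edges (restrict p (V - {v} - {r})) (V - {v}) r = (\<lambda>u. {u, p u}) ` (V - {v} - {r})"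
    unfolding Edges_def by (intro image_cong) auto
  have "V - {r} = insert v (V - {v} - {r})" using assms(2) by auto
  then show "Edges p V r = insert {v, p v} (Edges (restrict p (V - {v} - {r})) (V - {v}) r)"
    unfolding e Edges_def by simp
  show "{v, p v} \<notin> Edges (restrict p (V - {v} - {r})) (V - {v}) r"
  proof
    assume "{v, p v} \<in> Edges (restrict p (V - {v} - {r})) (V - {v}) r"
    then obtain u where u: "u \<in> V - {v} - {r}" "{v, p v} = {u, p u}" unfolding e by auto
    then have "p u = v" by (auto simp: doubleton_eq_iff)
    then show False using u assms(3) by auto
  qed
qed

lemma tree_single: "is_tree {r} {}"
proof -
  have "\<not> has_cycle {r} {}"
  proof
    assume "has_cycle {r} {}"
    then obtain cs where "length cs \<ge> 3" "distinct cs" "set cs \<subseteq> {r}" unfolding has_cycle_def by blast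
    then have "length cs \<le> card {r}" by (metis card_mono distinct_card finite.emptyI finite.insertI)
    then show False using \<open>length cs \<ge> 3\<close> by simp
  qed
  then show ?thesis unfolding is_tree_def is_graph_def connected_graph_def reach_def by simp
qed

theorem FF_tree:
  assumes "finite V" "r \<in> V" "p \<in> FF V {r}"
  shows "is_tree V (Edges p V r)"
  using assms
proof (induction "card V" arbitrary: V p rule: less_induct)
  case less
  show ?case
  proof (cases "V = {r}")
    case True
    then show ?thesis using tree_single unfolding Edges_def by simp
  next
    case False
    obtain v where v: "v \<in> V - {r}" "\<forall>u\<in>V - {r}. p u \<noteq> v"
      using FF_leaf_exists[OF less.prems(1,2) False less.prems(3)] by blast
    let ?p = "restrict p (V - {v} - {r})"
    have "?p \<in> FF (V - {v}) {r}" using FF_remove_leaf less.prems v by blast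
    moreover have "card (V - {v}) < card V"
    proof -
      have "card V > 0" using v less.prems(1) card_gt_0_iff by blast
      then show ?thesis using v less.prems(1) by simp
    qed
    ultimately have IH: "is_tree (V - {v}) (Edges ?p (V - {v}) r)"
      using less.hyps less.prems v by auto
    have pv: "p v \<in> V" "p v \<noteq> v" using FF_pi[OF less.prems(3)] v FF_no_fix[OF less.prems(3)]
      by (auto simp: PiE_def Pi_def)
    have "is_tree (insert v (V - {v})) (insert {v, p v} (Edges ?p (V - {v}) r))"
      by (rule tree_add_leaf[OF IH]) (use pv in auto)
    moreover have "insert v (V - {v}) = V" using v by auto
    ultimately show ?thesis using Edges_remove_leaf(1)[OF less.prems(3) v] by simp
  qed
qed


theorem FF_inj:
  assumes "finite V" "r \<in> V" "p \<in> FF V {r}" "q \<in> FF V {r}" "Edges p V r = Edges q V r"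
  shows "p = q"
  using assms
proof (induction "card V" arbitrary: V p q rule: less_induct)
  case less
  have pip: "p \<in> PiE (V - {r}) (\<lambda>_. V)" and piq: "q \<in> PiE (V - {r}) (\<lambda>_. V)"
    using FF_pi less.prems by blast+
  show ?case
  proof (cases "V = {r}")
    case True
    then show ?thesis using pip piq by simp
  next
    case False
    obtain v where v: "v \<in> V - {r}" "\<forall>u\<in>V - {r}. p u \<noteq> v"
      using FF_leaf_exists[OF less.prems(1,2) False less.prems(3)] by blast
    have qv: "q v = p v"
    proof -
      have "{v, q v} \<in> Edges p V r" using less.prems(5) v unfolding Edges_def by auto
      then obtain u where u: "u \<in> V - {r}" "{v, q v} = {u, p u}" unfolding Edges_def by auto
      show ?thesis
      proof (cases "u = v")
        case True
        then show ?thesis using u by (auto simp: doubleton_eq_iff)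
      next
        case False
        then have "p u = v" using u by (auto simp: doubleton_eq_iff)
        then show ?thesis using u v by auto
      qed
    qed
    have vq: "\<forall>u\<in>V - {r}. q u \<noteq> v"
    proof (intro ballI notI)
      fix u assume u: "u \<in> V - {r}" "q u = v"
      have "{u, v} \<in> Edges p V r" using less.prems(5) u unfolding Edges_def by auto
      then obtain x where x: "x \<in> V - {r}" "{u, v} = {x, p x}" unfolding Edges_def by auto
      have "x \<noteq> u"
      proof
        assume "x = u"
        then have "p u = v" using x by (auto simp: doubleton_eq_iff)
        then show False using v u by auto
      qed
      then have "x = v" "p x = u" using x by (auto simp: doubleton_eq_iff)
      then have quv: "q v = u" using qv by simp
      have "(v, r) \<in> (frel q (V - {r}))\<^sup>*" using FF_reach less.prems(4) v by blast
      then have "r \<in> {u, v}" by (rule closed_reach) (use quv u in auto)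
      then show False using u v by auto
    qed
    let ?p = "restrict p (V - {v} - {r})"
    let ?q = "restrict q (V - {v} - {r})"
    have fp: "?p \<in> FF (V - {v}) {r}" using FF_remove_leaf less.prems v by blast
    have fq: "?q \<in> FF (V - {v}) {r}" using FF_remove_leaf less.prems v vq by blast
    have ep: "Edges ?p (V - {v}) r = Edges p V r - {{v, p v}}"
      using Edges_remove_leaf[OF less.prems(3) v] by auto
    have eq: "Edges ?q (V - {v}) r = Edges q V r - {{v, q v}}"
      using Edges_remove_leaf[OF less.prems(4) v(1) vq] by auto
    have cv: "card (V - {v}) < card V"
    proof -
      have "card V > 0" using v less.prems(1) card_gt_0_iff by blast
      then show ?thesis using v less.prems(1) by simp
    qed
    have ee: "Edges ?p (V - {v}) r = Edges ?q (V - {v}) r"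
      unfolding ep eq using less.prems(5) qv by simp
    have pq: "?p = ?q"
      by (rule less.hyps[OF cv _ _ fp fq ee]) (use less.prems v in auto)
    show ?thesis
    proof
      fix u
      show "p u = q u"
      proof (cases "u \<in> V - {r}")
        case True
        show ?thesis
        proof (cases "u = v")
          case True
          then show ?thesis using qv by simp
        next
          case False
          then have "?p u = ?q u" using pq by simp
          then show ?thesis using False True by simp
        qed
      next
        case False
        then show ?thesis using pip piq by (auto simp: PiE_def extensional_def)
      qed
    qed
  qed
qed

lemma FF_extend:
  assumes p': "p' \<in> FF (V - {v}) {r}" and v: "v \<in> V - {r}" and uv: "u \<in> V" "u \<noteq> v"
  shows "p'(v := u) \<in> FF V {r}"
proof -
  define p where "p = p'(v := u)"
  have pi': "p' \<in> PiE (V - {v} - {r}) (\<lambda>_. V - {v})" using FF_pi[OF p'] .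
  have pin: "p x \<in> V" if "x \<in> V - {r}" for x
  proof (cases "x = v")
    case True
    then show ?thesis using uv by (simp add: p_def)
  next
    case False
    then have "x \<in> V - {v} - {r}" using that by blast
    then have "p' x \<in> V - {v}" using pi' by (simp add: PiE_iff)
    then show ?thesis using False by (simp add: p_def)
  qed
  have pout: "p x = undefined" if "x \<notin> V - {r}" for x
  proof -
    have "x \<noteq> v" using that v by blast
    moreover have "x \<notin> V - {v} - {r}" using that by blast
    moreover have "p' x = undefined" using pi' \<open>x \<notin> V - {v} - {r}\<close> by (rule PiE_arb)
    ultimately show ?thesis by (simp add: p_def)
  qed
  have pi: "p \<in> PiE (V - {r}) (\<lambda>_. V)"
    unfolding PiE_iff extensional_def using pin pout by blast
  have sub: "frel p' (V - {v} - {r}) \<subseteq> frel p (V - {r})"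
  proof (rule frel_mono)
    fix x assume "x \<in> V - {v} - {r}"
    then show "x \<in> V - {r} \<and> p' x = p x" by (simp add: p_def)
  qed
  have reach: "(x, r) \<in> (frel p (V - {r}))\<^sup>*" if xV: "x \<in> V" for x
  proof -
    have *: "(y, r) \<in> (frel p (V - {r}))\<^sup>*" if "y \<in> V - {v}" for y
      using rtrancl_mono[OF sub, THEN subsetD, OF FF_reach[OF p' that]] .
    show ?thesis
    proof (cases "x = v")
      case True
      have "(v, u) \<in> frel p (V - {r})" using v unfolding frel_def p_def by auto
      moreover have "(u, r) \<in> (frel p (V - {r}))\<^sup>*" using *[of u] uv by blast
      ultimately have "(v, r) \<in> (frel p (V - {r}))\<^sup>*" by (rule converse_rtrancl_into_rtrancl)
      then show ?thesis using True by simp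
    next
      case False
      then show ?thesis using * xV by blast
    qed
  qed
  show ?thesis unfolding FF_def p_def[symmetric] using pi reach by blast
qed

lemma Edges_extend:
  assumes v: "v \<in> V - {r}"
  shows "Edges (p'(v := u)) V r = insert {v, u} (Edges p' (V - {v}) r)"
proof -
  have vv: "V - {r} = insert v (V - {v} - {r})" using v by auto
  have im: "(\<lambda>x. {x, (p'(v := u)) x}) ` (V - {v} - {r}) = (\<lambda>x. {x, p' x}) ` (V - {v} - {r})"
    by (rule image_cong) auto
  have "Edges (p'(v := u)) V r = (\<lambda>x. {x, (p'(v := u)) x}) ` (insert v (V - {v} - {r}))"
    unfolding Edges_def using vv by simp
  also have "\<dots> = insert {v, u} ((\<lambda>x. {x, p' x}) ` (V - {v} - {r}))"
    using im by simp
  also have "\<dots> = insert {v, u} (Edges p' (V - {v}) r)"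
    unfolding Edges_def by (simp add: Diff_insert2[symmetric] insert_commute)
  finally show ?thesis .
qed

theorem tree_FF:
  assumes "finite V" "r \<in> V" "is_tree V E"
  shows "\<exists>p\<in>FF V {r}. Edges p V r = E"
  using assms
proof (induction "card V" arbitrary: V E rule: less_induct)
  case less
  have g: "is_graph V E" using less.prems unfolding is_tree_def by simp
  show ?case
  proof (cases "V = {r}")
    case True
    have "E = {}"
    proof (rule ccontr)
      assume "E \<noteq> {}"
      then obtain e where "e \<in> E" by blast
      then obtain a b where "a \<in> V" "b \<in> V" "a \<noteq> b" using g unfolding is_graph_def by blast
      then show False using True by blast
    qed
    moreover have "(\<lambda>_. undefined) \<in> FF V {r}" using True FF_all_roots by simp
    ultimately show ?thesis using True unfolding Edges_def by auto
  next
    case False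
    obtain v u where v: "v \<in> V - {r}" "adj E v u" "\<forall>w. adj E v w \<longrightarrow> w = u"
      using tree_leaf[OF less.prems(3,1,2) False] by blast
    have uv: "u \<in> V" "u \<noteq> v" using graph_adj[OF g v(2)] by auto
    have t': "is_tree (V - {v}) (E - {{v, u}})" using tree_remove_leaf[OF less.prems(3) v(2,3)] .
    have cv: "card (V - {v}) < card V"
    proof -
      have "card V > 0" using v less.prems(1) card_gt_0_iff by blast
      then show ?thesis using v less.prems(1) by simp
    qed
    have "\<exists>p\<in>FF (V - {v}) {r}. Edges p (V - {v}) r = E - {{v, u}}"
      by (rule less.hyps[OF cv _ _ t']) (use less.prems v in auto)
    then obtain p' where p': "p' \<in> FF (V - {v}) {r}" "Edges p' (V - {v}) r = E - {{v, u}}"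
      by blast
    have pF: "p'(v := u) \<in> FF V {r}" by (rule FF_extend[OF p'(1) v(1) uv])
    have "Edges (p'(v := u)) V r = insert {v, u} (E - {{v, u}})"
      using Edges_extend[OF v(1)] p'(2) by simp
    also have "insert {v, u} (E - {{v, u}}) = E" using v(2) unfolding adj_def by auto
    finally show ?thesis using pF by blast
  qed
qed

lemma children_Edges:
  assumes "p \<in> FF V {r}"
  shows "children (Edges p V r) r = {v \<in> V - {r}. p v = r}"
proof
  show "children (Edges p V r) r \<subseteq> {v \<in> V - {r}. p v = r}"
  proof
    fix c assume "c \<in> children (Edges p V r) r"
    then obtain v where "v \<in> V - {r}" "{r, c} = {v, p v}"
      unfolding children_def adj_def Edges_def by auto
    then show "c \<in> {v \<in> V - {r}. p v = r}" by (auto simp: doubleton_eq_iff)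
  qed
  show "{v \<in> V - {r}. p v = r} \<subseteq> children (Edges p V r) r"
  proof
    fix c assume c: "c \<in> {v \<in> V - {r}. p v = r}"
    then have "{c, p c} \<in> Edges p V r" unfolding Edges_def by auto
    then show "c \<in> children (Edges p V r) r" using c unfolding children_def adj_def
      by (auto simp: insert_commute)
  qed
qed


lemma tree_edges_subset:
  assumes "is_tree V E" shows "E \<subseteq> Pow V"
proof
  fix e assume "e \<in> E"
  moreover have "\<forall>e\<in>E. \<exists>u v. e = {u, v} \<and> u \<in> V \<and> v \<in> V \<and> u \<noteq> v"
    using assms unfolding is_tree_def is_graph_def by simp
  ultimately obtain u v where "e = {u, v}" "u \<in> V" "v \<in> V" by blast
  then show "e \<in> Pow V" by simp
qed

lemma finite_trees: "finite V \<Longrightarrow> finite {E. is_tree V E}"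
proof (rule finite_subset[of _ "Pow (Pow V)"])
  show "{E. is_tree V E} \<subseteq> Pow (Pow V)" using tree_edges_subset by blast
qed simp

lemma children_subset: "is_tree V E \<Longrightarrow> children E r \<subseteq> V - {r}"
proof
  fix c assume "is_tree V E" "c \<in> children E r"
  then have "is_graph V E" "adj E r c" unfolding is_tree_def children_def by auto
  then show "c \<in> V - {r}" using graph_adj by blast
qed

lemma count_children:
  assumes "finite V" "r \<in> V" "S \<subseteq> V - {r}"
  shows "card {E. is_tree V E \<and> children E r = S} = card (FF (V - {r}) S)"
proof -
  let ?A = "{p \<in> FF V {r}. {v \<in> V - {r}. p v = r} = S}"
  have "bij_betw (\<lambda>p. Edges p V r) ?A {E. is_tree V E \<and> children E r = S}"
    unfolding bij_betw_def
  proof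
    show "inj_on (\<lambda>p. Edges p V r) ?A"
    proof (rule inj_onI)
      fix p q assume "p \<in> ?A" "q \<in> ?A" "Edges p V r = Edges q V r"
      then show "p = q" using FF_inj[OF assms(1,2), of p q] by blast
    qed
    show "(\<lambda>p. Edges p V r) ` ?A = {E. is_tree V E \<and> children E r = S}"
    proof
      show "(\<lambda>p. Edges p V r) ` ?A \<subseteq> {E. is_tree V E \<and> children E r = S}"
      proof
        fix E assume "E \<in> (\<lambda>p. Edges p V r) ` ?A"
        then obtain p where p: "p \<in> ?A" "E = Edges p V r" by blast
        then have "is_tree V E" using FF_tree[OF assms(1,2)] by blast
        moreover have "children E r = S" using p children_Edges[of p V r] by simp
        ultimately show "E \<in> {E. is_tree V E \<and> children E r = S}" by simp
      qed
      show "{E. is_tree V E \<and> children E r = S} \<subseteq> (\<lambda>p. Edges p V r) ` ?A"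
      proof
        fix E assume E: "E \<in> {E. is_tree V E \<and> children E r = S}"
        then obtain p where p: "p \<in> FF V {r}" "Edges p V r = E" using tree_FF assms by blast
        then have "{v \<in> V - {r}. p v = r} = S" using children_Edges E by auto
        then show "E \<in> (\<lambda>p. Edges p V r) ` ?A" using p by blast
      qed
    qed
  qed
  then have "card ?A = card {E. is_tree V E \<and> children E r = S}" by (rule bij_betw_same_card)
  moreover have "card ?A = card (FF (V - {r}) (({r} - {r}) \<union> S))"
    by (rule bij_betw_same_card[OF FF_split_bij]) (use assms in auto)
  then have "card ?A = card (FF (V - {r}) S)" by simp
  ultimately show ?thesis by simp
qed

lemma hanging_desc:
  assumes "p \<in> FF V {r}" "c \<in> V - {r}" "p c = r" "(c, w) \<in> reach {e \<in> Edges p V r. r \<notin> e}"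
  shows "(w, c) \<in> (frel p (V - {r}))\<^sup>*"
  using assms(4) unfolding reach_def
proof (induction rule: rtrancl_induct)
  case base
  then show ?case by simp
next
  case (step y z)
  then have "{y, z} \<in> Edges p V r" "r \<notin> {y, z}" by (auto simp: adj_def)
  then obtain x where x: "x \<in> V - {r}" "{y, z} = {x, p x}" "r \<notin> {y, z}" unfolding Edges_def by auto
  show ?case
  proof (cases "y = x")
    case True
    then have z: "z = p y" using x by (auto simp: doubleton_eq_iff)
    have "y \<noteq> c" using z x assms(3) True by auto
    from step.IH show ?thesis
    proof (cases rule: converse_rtranclE)
      case base
      then show ?thesis using \<open>y \<noteq> c\<close> by simp
    next
      case (step y')
      then show ?thesis using z unfolding frel_def by auto
    qed
  next
    case False
    then have "z = x" "y = p x" using x by (auto simp: doubleton_eq_iff)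
    then have "(z, y) \<in> frel p (V - {r})" using x unfolding frel_def by auto
    then show ?thesis using step.IH by (rule converse_rtrancl_into_rtrancl)
  qed
qed

lemma hanging_other_child:
  assumes "p \<in> FF V {r}" "c \<in> V - {r}" "p c = r" "b \<in> V - {r}" "p b = r" "b \<noteq> c"
  shows "b \<notin> hanging_subtree V (Edges p V r) r c"
proof
  assume "b \<in> hanging_subtree V (Edges p V r) r c"
  then have "(c, b) \<in> reach {e \<in> Edges p V r. r \<notin> e}" unfolding hanging_subtree_def by auto
  then have "(b, c) \<in> (frel p (V - {r}))\<^sup>*" using hanging_desc assms by blast
  then have "(r, c) \<in> (frel p (V - {r}))\<^sup>*"
  proof (cases rule: converse_rtranclE)
    case base
    then show ?thesis using assms by simp
  next
    case (step y)
    then show ?thesis using assms(5) unfolding frel_def by auto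
  qed
  then show False
  proof (cases rule: converse_rtranclE)
    case base
    then show ?thesis using assms by simp
  next
    case (step y)
    then show ?thesis unfolding frel_def by auto
  qed
qed

lemma hanging_self:
  assumes "c \<in> V - {r}"
  shows "c \<in> hanging_subtree V E r c"
  using assms unfolding hanging_subtree_def reach_def by auto


lemma tree_H_bounds:
  assumes "finite V" "i \<in> V" "is_tree V E"
  shows "card {c \<in> children E i. c < i}
           \<le> card (\<Union>c\<in>{c \<in> children E i. c < i}. hanging_subtree V E i c)"
    and "card (\<Union>c\<in>{c \<in> children E i. c < i}. hanging_subtree V E i c)
           \<le> card (V - {i}) - card {c \<in> children E i. c > i}"
proof -
  obtain p where p: "p \<in> FF V {i}" "Edges p V i = E" using tree_FF[OF assms] by blast
  have ch: "children E i = {v \<in> V - {i}. p v = i}" using children_Edges[OF p(1)] p(2) by simp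
  let ?A = "{c \<in> children E i. c < i}"
  let ?B = "{c \<in> children E i. c > i}"
  let ?H = "\<Union>c\<in>?A. hanging_subtree V E i c"
  have AH: "?A \<subseteq> ?H"
  proof
    fix c assume "c \<in> ?A"
    then have "c \<in> V - {i}" using ch by auto
    then have "c \<in> hanging_subtree V E i c" by (rule hanging_self)
    then show "c \<in> ?H" using \<open>c \<in> ?A\<close> by blast
  qed
  have HV: "?H \<subseteq> (V - {i}) - ?B"
  proof
    fix w assume "w \<in> ?H"
    then obtain c where c: "c \<in> ?A" "w \<in> hanging_subtree V E i c" by blast
    have wV: "w \<in> V - {i}" using c(2) unfolding hanging_subtree_def by blast
    have "w \<notin> ?B"
    proof
      assume "w \<in> ?B"
      then have b: "w \<in> V - {i}" "p w = i" "w \<noteq> c" using ch c(1) by auto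
      have cc: "c \<in> V - {i}" "p c = i" using ch c(1) by auto
      have "w \<notin> hanging_subtree V (Edges p V i) i c"
        by (rule hanging_other_child[OF p(1) cc b])
      then show False using c(2) p(2) by simp
    qed
    then show "w \<in> (V - {i}) - ?B" using wV by blast
  qed
  have finH: "finite ?H" using HV assms(1) finite_subset by blast
  show "card ?A \<le> card ?H" using AH finH by (rule card_mono[rotated])
  have "card ?H \<le> card ((V - {i}) - ?B)" using HV assms(1) by (intro card_mono) auto
  also have "\<dots> = card (V - {i}) - card ?B"
  proof (rule card_Diff_subset)
    show "finite ?B" using assms(1) children_subset[OF assms(3), of i] finite_subset
      by (metis (no_types, lifting) finite_Diff mem_Collect_eq subsetI subsetD)
    show "?B \<subseteq> V - {i}" using children_subset[OF assms(3), of i] by blast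
  qed
  finally show "card ?H \<le> card (V - {i}) - card ?B" .
qed

lemma card_choice_sets:
  assumes "1 \<le> i" "i \<le> n + 1"
  shows "card {S. S \<subseteq> {1..n+1} - {i} \<and> card {c \<in> S. c < i} = k \<and> card {c \<in> S. c > i} = l}
         = ((i - 1) choose k) * ((n + 1 - i) choose l)"
proof -
  let ?SS = "{S. S \<subseteq> {1..n+1} - {i} \<and> card {c \<in> S. c < i} = k \<and> card {c \<in> S. c > i} = l}"
  let ?P = "{A. A \<subseteq> {1..<i} \<and> card A = k} \<times> {B. B \<subseteq> {i<..n+1} \<and> card B = l}"
  have "bij_betw (\<lambda>S. ({c \<in> S. c < i}, {c \<in> S. c > i})) ?SS ?P"
    unfolding bij_betw_def
  proof
    show "inj_on (\<lambda>S. ({c \<in> S. c < i}, {c \<in> S. c > i})) ?SS"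
    proof (rule inj_onI)
      fix S T assume S: "S \<in> ?SS" and T: "T \<in> ?SS"
        and eq: "({c \<in> S. c < i}, {c \<in> S. c > i}) = ({c \<in> T. c < i}, {c \<in> T. c > i})"
      have "S = {c \<in> S. c < i} \<union> {c \<in> S. c > i}" using S by auto
      also have "\<dots> = {c \<in> T. c < i} \<union> {c \<in> T. c > i}" using eq by simp
      also have "\<dots> = T" using T by auto
      finally show "S = T" .
    qed
    show "(\<lambda>S. ({c \<in> S. c < i}, {c \<in> S. c > i})) ` ?SS = ?P"
    proof
      show "(\<lambda>S. ({c \<in> S. c < i}, {c \<in> S. c > i})) ` ?SS \<subseteq> ?P"
      proof
        fix x assume "x \<in> (\<lambda>S. ({c \<in> S. c < i}, {c \<in> S. c > i})) ` ?SS"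
        then obtain S where S: "S \<in> ?SS" "x = ({c \<in> S. c < i}, {c \<in> S. c > i})" by blast
        have "{c \<in> S. c < i} \<subseteq> {1..<i}" "{c \<in> S. c > i} \<subseteq> {i<..n+1}" using S(1) by auto
        then show "x \<in> ?P" using S by simp
      qed
      show "?P \<subseteq> (\<lambda>S. ({c \<in> S. c < i}, {c \<in> S. c > i})) ` ?SS"
      proof
        fix x assume x: "x \<in> ?P"
        then obtain A B where AB: "x = (A, B)" "A \<subseteq> {1..<i}" "card A = k" "B \<subseteq> {i<..n+1}" "card B = l"
          by blast
        have a: "{c \<in> A \<union> B. c < i} = A" using AB by auto
        have b: "{c \<in> A \<union> B. c > i} = B" using AB by auto
        have "A \<subseteq> {1..n+1} - {i}" using AB(2) assms by (auto simp: subset_iff)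
        moreover have "B \<subseteq> {1..n+1} - {i}" using AB(4) assms by (auto simp: subset_iff)
        ultimately have "A \<union> B \<in> ?SS" using AB a b by simp
        then show "x \<in> (\<lambda>S. ({c \<in> S. c < i}, {c \<in> S. c > i})) ` ?SS"
          using a b AB(1) by (intro image_eqI[of _ _ "A \<union> B"]) auto
      qed
    qed
  qed
  then have "card ?SS = card ?P" by (rule bij_betw_same_card)
  also have "\<dots> = card {A. A \<subseteq> {1..<i} \<and> card A = k} * card {B. B \<subseteq> {i<..n+1} \<and> card B = l}"
    by (rule card_cartesian_product)
  also have "\<dots> = ((i - 1) choose k) * ((n + 1 - i) choose l)"
    by (simp add: n_subsets)
  finally show ?thesis .
qed


theorem mainTheorem2:
  fixes n i k l :: nat
  assumes "n \<ge> 1" and "1 \<le> i" and "i \<le> n + 1" and "k \<le> n" and "l \<le> n - k"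
  shows "real (\<Sum>m = k..n - l. Tcount n i k l m)
         = real (((i - 1) choose k) * ((n + 1 - i) choose l) * (k + l))
           * (real n) powi (int n - int k - int l - 1)"
proof -
  define V where "V = {1..n+1}"
  have finV: "finite V" unfolding V_def by simp
  have iV: "i \<in> V" using assms unfolding V_def by simp
  have cW: "card (V - {i}) = n" using iV finV unfolding V_def by simp
  define X where "X = {E. is_tree V E \<and> card {c \<in> children E i. c < i} = k \<and> card {c \<in> children E i. c > i} = l}"
  define Y where "Y m = {E. is_tree {1..n+1} E
      \<and> card {c \<in> children E i. c < i} = k
      \<and> card {c \<in> children E i. c > i} = l
      \<and> card (\<Union>c\<in>{c \<in> children E i. c < i}. hanging_subtree {1..n+1} E i c) = m}" for m
  have TY: "Tcount n i k l m = card (Y m)" for m unfolding Tcount_def Y_def by simp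
  have XY: "X = (\<Union>m\<in>{k..n-l}. Y m)"
  proof
    show "X \<subseteq> (\<Union>m\<in>{k..n-l}. Y m)"
    proof
      fix E assume E: "E \<in> X"
      then have t: "is_tree V E" and ck: "card {c \<in> children E i. c < i} = k"
        and cl: "card {c \<in> children E i. c > i} = l" unfolding X_def by auto
      define m where "m = card (\<Union>c\<in>{c \<in> children E i. c < i}. hanging_subtree V E i c)"
      have "k \<le> m" "m \<le> n - l" using tree_H_bounds[OF finV iV t] ck cl cW unfolding m_def by auto
      moreover have "E \<in> Y m" using t ck cl unfolding Y_def m_def V_def by simp
      ultimately show "E \<in> (\<Union>m\<in>{k..n-l}. Y m)" by auto
    qed
    show "(\<Union>m\<in>{k..n-l}. Y m) \<subseteq> X" unfolding X_def Y_def V_def by auto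
  qed
  have finY: "finite (Y m)" for m
    using finite_trees[OF finV] unfolding Y_def V_def by (rule finite_subset[rotated]) auto
  have sumX: "(\<Sum>m = k..n - l. Tcount n i k l m) = card X"
    unfolding TY XY by (rule card_UN_disjoint[symmetric]) (use finY in \<open>auto simp: Y_def\<close>)
  define SS where "SS = {S. S \<subseteq> {1..n+1} - {i} \<and> card {c \<in> S. c < i} = k \<and> card {c \<in> S. c > i} = l}"
  define Z where "Z S = {E. is_tree V E \<and> children E i = S}" for S
  have XZ: "X = (\<Union>S\<in>SS. Z S)"
  proof
    show "X \<subseteq> (\<Union>S\<in>SS. Z S)"
    proof
      fix E assume E: "E \<in> X"
      then have t: "is_tree V E" unfolding X_def by simp
      have "children E i \<in> SS" using E children_subset[OF t, of i] unfolding X_def SS_def V_def by auto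
      moreover have "E \<in> Z (children E i)" using t unfolding Z_def by simp
      ultimately show "E \<in> (\<Union>S\<in>SS. Z S)" by blast
    qed
    show "(\<Union>S\<in>SS. Z S) \<subseteq> X" unfolding X_def Z_def SS_def by auto
  qed
  have finSS: "finite SS" unfolding SS_def by (rule finite_subset[of _ "Pow {1..n+1}"]) auto
  have finZ: "finite (Z S)" for S
    using finite_trees[OF finV] unfolding Z_def by (rule finite_subset[rotated]) auto
  have cardX: "card X = (\<Sum>S\<in>SS. card (Z S))"
    unfolding XZ by (rule card_UN_disjoint) (use finSS finZ in \<open>auto simp: Z_def\<close>)
  have cZ: "real (card (Z S)) = real (k + l) * real n ^ (n - (k + l)) / real n" if S: "S \<in> SS" for S
  proof -
    have Ssub: "S \<subseteq> V - {i}" using S unfolding SS_def V_def by simp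
    have "S = {c \<in> S. c < i} \<union> {c \<in> S. c > i}" using Ssub by auto
    moreover have fS: "finite S" using Ssub finV finite_subset by blast
    moreover have "card ({c \<in> S. c < i} \<union> {c \<in> S. c > i}) = card {c \<in> S. c < i} + card {c \<in> S. c > i}"
      by (rule card_Un_disjoint) (use fS in auto)
    ultimately have "card S = card {c \<in> S. c < i} + card {c \<in> S. c > i}" by simp
    then have cS: "card S = k + l" using S unfolding SS_def by simp
    have "card (Z S) = card (FF (V - {i}) S)" unfolding Z_def by (rule count_children[OF finV iV Ssub])
    moreover have "real (card (FF (V - {i}) S)) * real (card (V - {i}))
        = real (card S) * real (card (V - {i})) ^ (card (V - {i}) - card S)"
    proof (rule card_FF)
      show "V - {i} \<noteq> {}" using cW assms(1) by (metis card.empty not_one_le_zero)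
    qed (use finV Ssub in auto)
    ultimately have "real (card (Z S)) * real n = real (k + l) * real n ^ (n - (k + l))"
      using cW cS by simp
    then show ?thesis using assms(1) by (simp add: field_simps)
  qed
  have "real (\<Sum>m = k..n - l. Tcount n i k l m) = (\<Sum>S\<in>SS. real (card (Z S)))"
    unfolding sumX cardX by simp
  also have "\<dots> = real (card SS) * (real (k + l) * real n ^ (n - (k + l)) / real n)"
    using cZ by simp
  also have "card SS = ((i - 1) choose k) * ((n + 1 - i) choose l)"
    unfolding SS_def by (rule card_choice_sets[OF assms(2,3)])
  finally have L: "real (\<Sum>m = k..n - l. Tcount n i k l m)
     = real (((i - 1) choose k) * ((n + 1 - i) choose l)) * (real (k + l) * real n ^ (n - (k + l)) / real n)" .
  have pw: "real n ^ (n - (k + l)) / real n = real n powi (int n - int k - int l - 1)"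
  proof -
    have e: "int n - int k - int l - 1 = int (n - (k + l)) - 1" using assms(4,5) by simp
    have "real n powi (int n - int k - int l - 1) = real n powi (int (n - (k + l)) - 1)"
      by (simp only: e)
    also have "\<dots> = real n powi int (n - (k + l)) / real n powi 1"
      by (rule power_int_diff) (use assms(1) in simp)
    also have "\<dots> = real n ^ (n - (k + l)) / real n"
      using power_int_of_nat[of "real n" 1] by simp
    finally show ?thesis by simp
  qed
  show ?thesis unfolding pw[symmetric] using L by simp
qed


end
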